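(* Let $E\subset\mathbb{R}^n$ be an ellipsoid with $\mathrm{vol}(E)<1$. Then $\mathrm{width}(E)\le n$.
   Context: An ellipsoid is a set $\{x\in\mathbb{R}^n: (x-a)^\top (AA^\top)^{-1}(x-a)\le 1\}$ with $A\in\mathbb{R}^{n\times n}$ non-singular and $a\in\mathbb{R}^n$. For a closed set $P$ and $c\in\mathbb{R}^n$, $\mathrm{width}_c(P)=\max_{x\in P}c^\top x-\min_{x\in P}c^\top x$; the lattice width is $\mathrm{width}(P)=\min\{\mathrm{width}_c(P): c\in\mathbb{Z}^n\setminus\{0\}\}$. *)

theory Defs
  imports "HOL-Analysis.Analysis"
begin

definition ellipsoid :: "real^'n^'n \<Rightarrow> real^'n \<Rightarrow> (real^'n) set" where
  "ellipsoid A a = {x. (x - a) \<bullet> (matrix_inv (A ** transpose A) *v (x - a)) \<le> 1}"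

definition width_dir :: "(real^'n) set \<Rightarrow> real^'n \<Rightarrow> real" where
  "width_dir P c = (SUP x\<in>P. c \<bullet> x) - (INF x\<in>P. c \<bullet> x)"

definition int_vectors :: "(real^'n) set" where
  "int_vectors = {c. \<forall>i. c $ i \<in> \<int>}"

definition lattice_width :: "(real^'n) set \<Rightarrow> real" where
  "lattice_width P = Inf (width_dir P ` (int_vectors - {0}))"

end

theory Submission
  imports Defs
begin

typedef 'a wo = "UNIV :: 'a set" by auto

instance wo :: (finite) finite
proof
  have "(UNIV :: 'a wo set) = Abs_wo ` UNIV"
    by (metis Abs_wo_cases surjI surj_def)
  then show "finite (UNIV :: 'a wo set)" by (metis finite finite_imageI)
qed

instantiation wo :: (finite) linorder
begin
definition less_eq_wo :: "'a wo \<Rightarrow> 'a wo \<Rightarrow> bool" where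
  "less_eq_wo x y \<longleftrightarrow> to_nat (Rep_wo x) \<le> to_nat (Rep_wo y)"
definition less_wo :: "'a wo \<Rightarrow> 'a wo \<Rightarrow> bool" where
  "less_wo x y \<longleftrightarrow> to_nat (Rep_wo x) < to_nat (Rep_wo y)"
instance
proof
  fix x y z :: "'a wo"
  show "(x < y) = (x \<le> y \<and> \<not> y \<le> x)" unfolding less_eq_wo_def less_wo_def by auto
  show "x \<le> x" unfolding less_eq_wo_def by auto
  show "x \<le> y \<Longrightarrow> y \<le> z \<Longrightarrow> x \<le> z" unfolding less_eq_wo_def by auto
  show "x \<le> y \<Longrightarrow> y \<le> x \<Longrightarrow> x = y" unfolding less_eq_wo_def
    by (metis Rep_wo_inject antisym to_nat_split)
  show "x \<le> y \<or> y \<le> x" unfolding less_eq_wo_def by auto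
qed
end

instance wo :: (finite) wellorder
proof
  fix P :: "'a wo \<Rightarrow> bool" and a
  assume H: "\<And>x. (\<And>y. y < x \<Longrightarrow> P y) \<Longrightarrow> P x"
  have "\<forall>x. to_nat (Rep_wo x) = n \<longrightarrow> P x" for n
  proof (induction n rule: less_induct)
    case (less n)
    then show ?case using H unfolding less_wo_def by blast
  qed
  then show "P a" by blast
qed



lemma Basis_cart_real: "(Basis :: (real^'n) set) = (\<lambda>i. axis i 1) ` UNIV"
  by (auto simp: Basis_vec_def)

lemma prod_Basis_cart: "(\<Prod>b\<in>Basis. (x::real^'n) \<bullet> b) = (\<Prod>i\<in>UNIV. x$i)"
proof -
  have "inj (\<lambda>i. axis i (1::real) :: real^'n)"
    by (auto simp: inj_def axis_eq_axis)
  then show ?thesis unfolding Basis_cart_real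
    by (simp add: prod.reindex inner_axis)
qed

lemma all_Basis_cart: "(\<forall>b\<in>Basis. (l::real^'n) \<bullet> b \<le> u \<bullet> b) \<longleftrightarrow> (\<forall>i. l$i \<le> u$i)"
  unfolding Basis_cart_real by (auto simp: inner_axis)

definition phi :: "real^'n \<Rightarrow> real^('n::finite wo)" where
  "phi x = (\<chi> i. x $ Rep_wo i)"
definition psi :: "real^('n::finite wo) \<Rightarrow> real^'n" where
  "psi y = (\<chi> k. y $ Abs_wo k)"

lemma psi_phi[simp]: "psi (phi x) = x"
  by (simp add: phi_def psi_def Abs_wo_inverse vec_eq_iff)
lemma phi_psi[simp]: "phi (psi y) = y"
  by (simp add: phi_def psi_def Rep_wo_inverse vec_eq_iff)

lemma phi_cont: "continuous_on UNIV (phi :: real^'n \<Rightarrow> real^('n::finite wo))"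
  unfolding phi_def by (intro continuous_on_vec_lambda continuous_on_component continuous_on_id)

lemma phi_meas: "(phi :: real^'n \<Rightarrow> real^('n::finite wo)) \<in> borel_measurable borel"
  using phi_cont borel_measurable_continuous_onI by blast

lemma prod_wo: "(\<Prod>i\<in>UNIV. f (Rep_wo i)) = (\<Prod>k\<in>(UNIV::'n::finite set). (f k :: real))"
proof -
  have "bij_betw Rep_wo (UNIV :: 'n wo set) (UNIV :: 'n set)"
    by (metis Rep_wo_inject UNIV_I bij_betw_def inj_onI type_definition.Rep_range type_definition_wo)
  then show ?thesis by (rule prod.reindex_bij_betw)
qed

lemma all_wo: "(\<forall>k. Q (Abs_wo k) k) = (\<forall>i. Q i (Rep_wo i))"
proof
  assume "\<forall>k. Q (Abs_wo k) k"
  then show "\<forall>i. Q i (Rep_wo i)" by (metis Rep_wo_inverse)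
next
  assume "\<forall>i. Q i (Rep_wo i)"
  then show "\<forall>k. Q (Abs_wo k) k" by (metis Abs_wo_inverse UNIV_I)
qed

lemma vimage_phi_box: "phi -` box l u = box (psi l) (psi (u :: real^('n::finite wo)))"
proof -
  have "x \<in> phi -` box l u \<longleftrightarrow> x \<in> box (psi l) (psi u)" for x
  proof -
    have "x \<in> box (psi l) (psi u) \<longleftrightarrow> (\<forall>k. l $ Abs_wo k < x $ k \<and> x $ k < u $ Abs_wo k)"
      by (simp add: mem_box_cart psi_def)
    also have "\<dots> \<longleftrightarrow> (\<forall>i. l $ i < x $ Rep_wo i \<and> x $ Rep_wo i < u $ i)"
      by (rule all_wo[where Q="\<lambda>i k. l $ i < x $ k \<and> x $ k < u $ i"])
    finally show ?thesis by (simp add: mem_box_cart phi_def)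
  qed
  then show ?thesis by blast
qed

lemma distr_phi: "distr lborel borel (phi :: real^'n \<Rightarrow> real^('n::finite wo)) = lborel"
proof (rule lborel_eqI[symmetric])
  fix l u :: "real^('n wo)"
  assume le: "\<And>b. b \<in> Basis \<Longrightarrow> l \<bullet> b \<le> u \<bullet> b"
  then have le': "\<forall>i. l$i \<le> u$i" using all_Basis_cart by blast
  have le2: "\<forall>b\<in>Basis. psi l \<bullet> b \<le> psi u \<bullet> b"
    using le' by (simp add: all_Basis_cart psi_def)
  have "emeasure (distr lborel borel phi) (box l u) = emeasure lborel (phi -` box l u \<inter> space lborel)"
    by (rule emeasure_distr) (auto simp: phi_meas)
  also have "\<dots> = emeasure lborel (box (psi l) (psi u))"
    by (simp add: vimage_phi_box)
  also have "\<dots> = (\<Prod>b\<in>Basis. (psi u - psi l) \<bullet> b)"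
    using le2 by (simp add: emeasure_lborel_box_eq)
  also have "\<dots> = (\<Prod>k\<in>UNIV. (psi u - psi l) $ k)"
    by (simp add: prod_Basis_cart)
  also have "\<dots> = (\<Prod>i\<in>UNIV. (u - l) $ i)"
    using prod_wo[of "\<lambda>k. (psi u - psi l) $ k"] by (simp add: psi_def Rep_wo_inverse)
  also have "\<dots> = (\<Prod>b\<in>Basis. (u - l) \<bullet> b)"
    by (simp add: prod_Basis_cart)
  finally show "emeasure (distr lborel borel phi) (box l u) = (\<Prod>b\<in>Basis. (u - l) \<bullet> b)" .
qed simp


lemma bij_Rep_wo: "bij_betw Rep_wo (UNIV :: 'n wo set) (UNIV :: 'n set)"
  by (metis Rep_wo_inject bij_betw_def inj_onI type_definition.Rep_range type_definition_wo)

lemma sum_wo: "(\<Sum>i\<in>UNIV. f (Rep_wo i)) = (\<Sum>k\<in>(UNIV::'n::finite set). (f k :: real))"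
  using bij_Rep_wo by (rule sum.reindex_bij_betw)

definition cj :: "real^'n^'n \<Rightarrow> real^('n::finite wo)^('n wo)" where
  "cj M = (\<chi> i j. M $ Rep_wo i $ Rep_wo j)"

lemma cj_mv: "cj M *v phi x = phi (M *v x)"
  unfolding vec_eq_iff
  by (simp add: cj_def phi_def matrix_vector_mult_def sum_wo[of "\<lambda>k. M $ _ $ k * x $ k"])

lemma cj_mul: "cj (M ** N) = cj M ** cj N"
  unfolding vec_eq_iff
  by (simp add: cj_def matrix_matrix_mult_def sum_wo[of "\<lambda>k. M $ _ $ k * N $ k $ _"])

lemma cj_transpose: "cj (transpose M) = transpose (cj M)"
  by (simp add: cj_def transpose_def vec_eq_iff)

lemma cj_mat1: "cj (mat 1) = mat 1"
  by (simp add: cj_def mat_def vec_eq_iff Rep_wo_inject)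

lemma psi_cont: "continuous_on UNIV (psi :: real^('n::finite wo) \<Rightarrow> real^'n)"
  unfolding psi_def by (intro continuous_on_vec_lambda continuous_on_component continuous_on_id)

lemma measure_phi:
  fixes S :: "(real^'n::finite) set"
  assumes "compact S"
  shows "measure lebesgue (phi ` S) = measure lebesgue S"
proof -
  have cS: "compact (phi ` S)"
    using assms phi_cont compact_continuous_image continuous_on_subset by blast
  have bS: "S \<in> sets borel" using assms by (simp add: borel_compact)
  have bpS: "phi ` S \<in> sets borel" using cS by (simp add: borel_compact)
  have "measure lebesgue (phi ` S) = measure lborel (phi ` S)"
    using bpS by (simp add: measure_completion)
  also have "\<dots> = measure (distr lborel borel phi) (phi ` S)"
    by (simp add: distr_phi)
  also have "\<dots> = measure lborel (phi -` (phi ` S) \<inter> space lborel)"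
    by (rule measure_distr) (auto simp: phi_meas bpS)
  also have "phi -` (phi ` S) \<inter> space lborel = S"
    by (auto, metis psi_phi)
  also have "measure lborel S = measure lebesgue S"
    using bS by (simp add: measure_completion)
  finally show ?thesis .
qed

lemma measure_lin_image:
  fixes M :: "real^'n::finite^'n" and X :: "(real^'n) set"
  assumes "compact X"
  shows "measure lebesgue ((\<lambda>x. M *v x) ` X) = \<bar>det (cj M)\<bar> * measure lebesgue X"
proof -
  have cMX: "compact ((\<lambda>x. M *v x) ` X)"
    by (intro compact_continuous_image assms linear_continuous_on matrix_vector_mul_linear[THEN linear_conv_bounded_linear[THEN iffD1]])
  have cX: "compact (phi ` X)"
    using assms phi_cont compact_continuous_image continuous_on_subset by blast
  have eq: "phi ` ((\<lambda>x. M *v x) ` X) = (\<lambda>y. cj M *v y) ` (phi ` X)"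
    by (auto simp: image_image cj_mv)
  have "measure lebesgue ((\<lambda>x. M *v x) ` X) = measure lebesgue (phi ` ((\<lambda>x. M *v x) ` X))"
    using measure_phi[OF cMX] by simp
  also have "\<dots> = measure lebesgue ((\<lambda>y. cj M *v y) ` (phi ` X))"
    by (simp add: eq)
  also have "\<dots> = \<bar>det (matrix ((*v) (cj M)))\<bar> * measure lebesgue (phi ` X)"
    by (rule measure_linear_image) (auto intro: lmeasurable_compact cX matrix_vector_mul_linear)
  also have "\<dots> = \<bar>det (cj M)\<bar> * measure lebesgue X"
    by (simp add: matrix_of_matrix_vector_mul measure_phi[OF assms])
  finally show ?thesis .
qed



lemma cell_borel:
  fixes k :: "'n::finite \<Rightarrow> int"
  shows "{x::real^'n. \<forall>i. \<lfloor>x$i\<rfloor> = k i} \<in> sets borel"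
proof -
  have eq: "{x::real^'n. \<forall>i. \<lfloor>x$i\<rfloor> = k i} =
     (\<Inter>i\<in>UNIV. {x. real_of_int (k i) \<le> x$i} \<inter> {x. x$i < real_of_int (k i) + 1})"
    by (auto simp: floor_eq_iff)
  show ?thesis unfolding eq
    by (intro sets.finite_INT sets.Int borel_closed borel_open
        closed_halfspace_component_ge_cart open_halfspace_component_lt_cart) auto
qed

lemma blichfeldt:
  fixes S :: "(real^'n::finite) set"
  assumes cS: "compact S" and mS: "measure lebesgue S > 1"
  shows "\<exists>x\<in>S. \<exists>y\<in>S. x \<noteq> y \<and> (\<forall>i. (x - y)$i \<in> \<int>)"
proof (rule ccontr)
  assume H: "\<not> ?thesis"
  have bS: "bounded S" using cS compact_imp_bounded by blast
  then obtain R where R: "\<And>x. x \<in> S \<Longrightarrow> norm x \<le> R" by (auto simp: bounded_iff)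
  define N :: int where "N = \<lceil>R\<rceil>"
  define K where "K = PiE (UNIV::'n set) (\<lambda>_. {-N..N})"
  have finK: "finite K" unfolding K_def by (intro finite_PiE) auto
  define vk :: "('n \<Rightarrow> int) \<Rightarrow> real^'n" where "vk k = (\<chi> i. real_of_int (k i))" for k
  define P where "P k = S \<inter> {x. \<forall>i. \<lfloor>x$i\<rfloor> = k i}" for k
  define T where "T k = (\<lambda>x. x - vk k) ` P k" for k
  have SU: "S = (\<Union>k\<in>K. P k)"
  proof
    show "S \<subseteq> (\<Union>k\<in>K. P k)"
    proof
      fix x assume x: "x \<in> S"
      have "\<lfloor>x$i\<rfloor> \<in> {-N..N}" for i
      proof -
        have "\<bar>x$i\<bar> \<le> R" using R[OF x] component_le_norm_cart[of x i] by linarith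
        then have a: "-R \<le> x$i" "x$i \<le> R" by auto
        have b: "R \<le> of_int N" unfolding N_def by (rule le_of_int_ceiling)
        have "-N \<le> \<lfloor>x$i\<rfloor>" using a b by (simp add: le_floor_iff)
        moreover have "\<lfloor>x$i\<rfloor> \<le> N" using a b by (simp add: floor_le_iff)
        ultimately show ?thesis by simp
      qed
      then have "(\<lambda>i. \<lfloor>x$i\<rfloor>) \<in> K" unfolding K_def by (auto simp: PiE_UNIV_domain)
      then show "x \<in> (\<Union>k\<in>K. P k)" using x unfolding P_def by blast
    qed
  qed (auto simp: P_def)
  have Psets: "P k \<in> sets lebesgue" for k
    unfolding P_def
    by (intro sets.Int sets_completionI_sets)
       (auto simp: cell_borel borel_compact[OF cS])
  have Plm: "P k \<in> lmeasurable" for k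
    by (rule bounded_set_imp_lmeasurable[OF bounded_subset[OF bS] Psets]) (auto simp: P_def)
  have Tlm: "T k \<in> lmeasurable" for k
    unfolding T_def by (rule measurable_translation_subtract[OF Plm])
  have mT: "measure lebesgue (T k) = measure lebesgue (P k)" for k
    unfolding T_def by (rule measure_translation_subtract)
  have disjP: "disjoint_family_on P K"
    unfolding disjoint_family_on_def P_def by (auto simp: fun_eq_iff)
  have disjT: "disjoint_family_on T K"
    unfolding disjoint_family_on_def
  proof (intro ballI impI)
    fix k l assume "k \<in> K" "l \<in> K" "k \<noteq> l"
    show "T k \<inter> T l = {}"
    proof (rule ccontr)
      assume "T k \<inter> T l \<noteq> {}"
      then obtain x y where x: "x \<in> P k" and y: "y \<in> P l" and eq: "x - vk k = y - vk l"
        unfolding T_def by auto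
      have "x - y = vk k - vk l" using eq by (simp add: algebra_simps)
      then have "\<forall>i. (x - y)$i \<in> \<int>" by (simp add: vk_def)
      moreover have "x \<in> S" "y \<in> S" using x y by (auto simp: P_def)
      ultimately have "x = y" using H by blast
      then have "k = l" using x y by (auto simp: P_def fun_eq_iff)
      then show False using \<open>k \<noteq> l\<close> by blast
    qed
  qed
  have "measure lebesgue S = (\<Sum>k\<in>K. measure lebesgue (P k))"
    unfolding SU
    by (rule measure_finite_Union[OF finK]) (use Psets disjP fmeasurableD2[OF Plm] in auto)
  also have "\<dots> = (\<Sum>k\<in>K. measure lebesgue (T k))" by (simp add: mT)
  also have "\<dots> = measure lebesgue (\<Union>k\<in>K. T k)"
    by (rule measure_finite_Union[OF finK, symmetric]) (use Tlm disjT fmeasurableD2[OF Tlm] in auto)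
  also have "\<dots> \<le> measure lebesgue (cbox (0::real^'n) 1)"
  proof (rule measure_mono_fmeasurable)
    show "(\<Union>k\<in>K. T k) \<subseteq> cbox 0 1"
    proof
      fix z assume "z \<in> (\<Union>k\<in>K. T k)"
      then obtain k x where x: "x \<in> P k" and z: "z = x - vk k" unfolding T_def by auto
      have "0 \<le> z$i \<and> z$i \<le> 1" for i
      proof -
        have fl: "\<lfloor>x$i\<rfloor> = k i" using x unfolding P_def by auto
        have "of_int \<lfloor>x$i\<rfloor> \<le> x$i" by (rule of_int_floor_le)
        moreover have "x$i < of_int \<lfloor>x$i\<rfloor> + 1" by (rule real_of_int_floor_add_one_gt)
        ultimately show ?thesis using fl z by (simp add: vk_def)
      qed
      then show "z \<in> cbox 0 1" by (simp add: mem_box_cart)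
    qed
    show "(\<Union>k\<in>K. T k) \<in> sets lebesgue"
      using Tlm finK by (intro sets.finite_UN) (auto simp: fmeasurable_def)
    show "cbox 0 1 \<in> lmeasurable" by simp
  qed
  also have "\<dots> = 1"
  proof -
    have ne: "cbox (0::real^'n) 1 \<noteq> {}"
      using mem_box_cart(2)[of "0::real^'n" 0 1] by auto
    show ?thesis by (simp add: measure_completion content_cbox_cart[OF ne])
  qed
  finally show False using mS by simp
qed



lemma norm_bound_comp:
  fixes u :: "real^'n::finite"
  assumes "\<And>i. \<bar>u$i\<bar> \<le> c"
  shows "norm u \<le> sqrt (real CARD('n)) * c"
proof -
  have c0: "0 \<le> c" using assms[of undefined] by linarith
  have "u \<bullet> u = (\<Sum>i\<in>UNIV. u$i * u$i)" by (simp add: inner_vec_def)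
  also have "\<dots> \<le> (\<Sum>i\<in>(UNIV::'n set). c * c)"
  proof (rule sum_mono)
    fix i
    have "u$i * u$i = \<bar>u$i\<bar> * \<bar>u$i\<bar>" by (metis abs_mult_self_eq)
    then show "u$i * u$i \<le> c * c" using mult_mono[OF assms[of i] assms[of i]] c0 by simp
  qed
  also have "\<dots> = real CARD('n) * c^2" by (simp add: power2_eq_square)
  finally have "u \<bullet> u \<le> real CARD('n) * c^2" .
  then have "sqrt (u \<bullet> u) \<le> sqrt (real CARD('n) * c^2)" by (rule real_sqrt_le_mono)
  then show ?thesis using c0 by (simp add: norm_eq_sqrt_inner real_sqrt_mult)
qed

lemma measure_cube:
  assumes "0 \<le> t"
  shows "measure lebesgue (cbox (vec (-t)) (vec t) :: (real^'n::finite) set) = (2*t) ^ CARD('n)"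
proof -
  have ne: "cbox (vec (-t)) (vec t :: real^'n) \<noteq> {}"
    using mem_box_cart(2)[of "0::real^'n" "vec (-t)" "vec t"] assms by auto
  show ?thesis by (simp add: measure_completion content_cbox_cart[OF ne])
qed

lemma inv_facts:
  fixes A :: "real^'n::finite^'n"
  assumes "invertible A"
  shows "A ** matrix_inv A = mat 1" "matrix_inv A ** A = mat 1"
proof -
  have "A ** matrix_inv A = mat 1 \<and> matrix_inv A ** A = mat 1"
    unfolding matrix_inv_def using assms[unfolded invertible_def] by (rule someI_ex)
  then show "A ** matrix_inv A = mat 1" "matrix_inv A ** A = mat 1" by auto
qed

lemma ell_eq:
  fixes A :: "real^'n::finite^'n"
  assumes "invertible A"
  shows "ellipsoid A a = (\<lambda>u. a + A *v u) ` cball 0 1"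
proof -
  define Ai where "Ai = matrix_inv A"
  have AAi: "A ** Ai = mat 1" and AiA: "Ai ** A = mat 1" using inv_facts[OF assms] by (auto simp: Ai_def)
  define M where "M = A ** transpose A"
  define Q where "Q = transpose Ai ** Ai"
  have MQ: "M ** Q = mat 1"
  proof -
    have "M ** Q = A ** (transpose A ** transpose Ai) ** Ai"
      by (simp add: M_def Q_def matrix_mul_assoc)
    also have "transpose A ** transpose Ai = mat 1"
      by (metis AiA matrix_transpose_mul transpose_mat)
    finally show ?thesis by (simp add: AAi)
  qed
  have QM: "Q ** M = mat 1"
  proof -
    have "Q ** M = transpose Ai ** (Ai ** A) ** transpose A"
      by (simp add: M_def Q_def matrix_mul_assoc)
    also have "\<dots> = transpose Ai ** transpose A" by (simp add: AiA)
    also have "\<dots> = mat 1" by (metis AAi matrix_transpose_mul transpose_mat)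
    finally show ?thesis .
  qed
  have invM: "invertible M" unfolding invertible_def using MQ QM by blast
  have Mi: "matrix_inv M = Q"
  proof -
    have X1: "matrix_inv M ** M = mat 1" using inv_facts(2)[OF invM] .
    have "matrix_inv M = matrix_inv M ** (M ** Q)" by (simp add: MQ)
    also have "\<dots> = (matrix_inv M ** M) ** Q" by (simp add: matrix_mul_assoc)
    also have "\<dots> = Q" by (simp add: X1)
    finally show ?thesis .
  qed
  have quad: "v \<bullet> (Q *v v) = norm (Ai *v v) ^ 2" for v
  proof -
    have "v \<bullet> (Q *v v) = v \<bullet> (transpose Ai *v (Ai *v v))" by (simp only: Q_def matrix_vector_mul_assoc)
    also have "\<dots> = (v v* transpose Ai) \<bullet> (Ai *v v)" by (rule dot_lmul_matrix[symmetric])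
    also have "\<dots> = (Ai *v v) \<bullet> (Ai *v v)" by (simp only: vector_transpose_matrix)
    finally show ?thesis by (simp add: dot_square_norm)
  qed
  show ?thesis
  proof (rule set_eqI)
    fix x
    have "x \<in> ellipsoid A a \<longleftrightarrow> (x - a) \<bullet> (Q *v (x - a)) \<le> 1"
      unfolding ellipsoid_def using Mi by (simp add: M_def)
    also have "\<dots> \<longleftrightarrow> norm (Ai *v (x - a)) ^ 2 \<le> 1" by (simp only: quad)
    also have "\<dots> \<longleftrightarrow> norm (Ai *v (x - a)) \<le> 1"
      using power_le_one_iff[OF norm_ge_zero, of "Ai *v (x - a)" 2] by simp
    also have "\<dots> \<longleftrightarrow> x \<in> (\<lambda>u. a + A *v u) ` cball 0 1"
    proof
      assume h: "norm (Ai *v (x - a)) \<le> 1"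
      have "x = a + A *v (Ai *v (x - a))" by (simp add: matrix_vector_mul_assoc AAi)
      then show "x \<in> (\<lambda>u. a + A *v u) ` cball 0 1" using h by auto
    next
      assume "x \<in> (\<lambda>u. a + A *v u) ` cball 0 1"
      then obtain u where u: "norm u \<le> 1" "x = a + A *v u" by auto
      then have "Ai *v (x - a) = u" by (simp add: matrix_vector_mul_assoc AiA)
      then show "norm (Ai *v (x - a)) \<le> 1" using u by simp
    qed
    finally show "x \<in> ellipsoid A a \<longleftrightarrow> x \<in> (\<lambda>u. a + A *v u) ` cball 0 1" .
  qed
qed



lemma width_bounds:
  fixes E :: "(real^'n::finite) set"
  assumes aE: "a \<in> E" and b: "\<And>x. x \<in> E \<Longrightarrow> \<bar>c \<bullet> x - c \<bullet> a\<bar> \<le> r"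
  shows "0 \<le> width_dir E c" "width_dir E c \<le> 2 * r"
proof -
  have ne: "E \<noteq> {}" using aE by blast
  have ba: "bdd_above ((\<lambda>x. c \<bullet> x) ` E)"
    by (rule bdd_aboveI2[of _ _ "c \<bullet> a + r"]) (use b in fastforce)
  have bb: "bdd_below ((\<lambda>x. c \<bullet> x) ` E)"
    by (rule bdd_belowI2[of _ "c \<bullet> a - r"]) (use b in fastforce)
  have s1: "(SUP x\<in>E. c \<bullet> x) \<le> c \<bullet> a + r"
    by (rule cSUP_least[OF ne]) (use b in fastforce)
  have i1: "c \<bullet> a - r \<le> (INF x\<in>E. c \<bullet> x)"
    by (rule cINF_greatest[OF ne]) (use b in fastforce)
  have s2: "c \<bullet> a \<le> (SUP x\<in>E. c \<bullet> x)" by (rule cSUP_upper[OF aE ba])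
  have i2: "(INF x\<in>E. c \<bullet> x) \<le> c \<bullet> a" by (rule cINF_lower[OF bb aE])
  show "0 \<le> width_dir E c" "width_dir E c \<le> 2 * r"
    unfolding width_dir_def using s1 i1 s2 i2 by linarith+
qed

theorem mainTheorem11:
  fixes A :: "real^'n^'n" and a :: "real^'n"
  assumes "invertible A"
    and "measure lebesgue (ellipsoid A a) < 1"
  shows "lattice_width (ellipsoid A a) \<le> real CARD('n)"
proof -
  define n where "n = real CARD('n)"
  have npos: "n > 0" by (simp add: n_def)
  define E where "E = ellipsoid A a"
  have Eeq: "E = (\<lambda>u. a + A *v u) ` cball 0 1" using ell_eq[OF assms(1)] by (simp add: E_def)
  define Ai where "Ai = matrix_inv A"
  have AAi: "A ** Ai = mat 1" and AiA: "Ai ** A = mat 1" using inv_facts[OF assms(1)] by (auto simp: Ai_def)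
  define B where "B = transpose Ai"
  have BAt: "B ** transpose A = mat 1" by (metis AAi B_def matrix_transpose_mul transpose_mat)
  have AtB: "transpose A ** B = mat 1" by (metis AiA B_def matrix_transpose_mul transpose_mat)
  have detprod: "\<bar>det (cj A)\<bar> * \<bar>det (cj B)\<bar> = 1"
  proof -
    have "det (cj B) * det (cj A) = det (cj B ** transpose (cj A))" by (simp add: det_mul det_transpose)
    also have "cj B ** transpose (cj A) = mat 1"
      by (simp add: cj_transpose[symmetric] cj_mul[symmetric] BAt cj_mat1)
    finally have "det (cj B) * det (cj A) = 1" by (simp add: det_I)
    then show ?thesis by (metis abs_mult abs_one mult.commute)
  qed
  have linA: "bounded_linear (\<lambda>u. A *v u)"
    using matrix_vector_mul_linear[THEN linear_conv_bounded_linear[THEN iffD1]] by simp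
  have linB: "bounded_linear (\<lambda>u. B *v u)"
    using matrix_vector_mul_linear[THEN linear_conv_bounded_linear[THEN iffD1]] by simp
  have contE: "continuous_on UNIV (\<lambda>u. a + A *v u)"
    by (intro continuous_intros linear_continuous_on linA)
  have cE: "compact E" unfolding Eeq
    using compact_continuous_image[OF continuous_on_subset[OF contE] compact_cball] by blast
  have aE: "a \<in> E" unfolding Eeq by (rule image_eqI[of _ _ 0]) auto
  define t where "t = 1 / sqrt n"
  have t0: "0 \<le> t" using npos by (simp add: t_def)
  define Ct where "Ct = (cbox (vec (-t)) (vec t) :: (real^'n) set)"
  have Ct_sub: "Ct \<subseteq> cball 0 1"
  proof
    fix u assume "u \<in> Ct"
    then have "\<bar>u$i\<bar> \<le> t" for i by (auto simp: Ct_def mem_box_cart abs_le_iff) (metis minus_le_iff)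
    then have "norm u \<le> sqrt n * t" using norm_bound_comp[of u t] by (simp add: n_def)
    also have "\<dots> = 1" using npos by (simp add: t_def)
    finally show "u \<in> cball 0 1" by simp
  qed
  have m1: "measure lebesgue ((\<lambda>u. A *v u) ` Ct) = \<bar>det (cj A)\<bar> * (2*t)^CARD('n)"
  proof -
    have "measure lebesgue Ct = (2*t)^CARD('n)" unfolding Ct_def by (rule measure_cube[OF t0])
    moreover have "compact Ct" by (simp add: Ct_def)
    ultimately show ?thesis using measure_lin_image[of Ct A] by simp
  qed
  have cACt: "compact ((\<lambda>u. A *v u) ` Ct)"
    by (intro compact_continuous_image linear_continuous_on linA) (simp add: Ct_def)
  have m1E: "measure lebesgue ((\<lambda>u. A *v u) ` Ct) \<le> measure lebesgue E"
  proof -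
    have "measure lebesgue ((\<lambda>u. A *v u) ` Ct) = measure lebesgue ((+) a ` ((\<lambda>u. A *v u) ` Ct))"
      by (simp add: measure_translation)
    also have "\<dots> \<le> measure lebesgue E"
    proof (rule measure_mono_fmeasurable)
      show "(+) a ` (\<lambda>u. A *v u) ` Ct \<subseteq> E" unfolding Eeq using Ct_sub by auto
      show "(+) a ` (\<lambda>u. A *v u) ` Ct \<in> sets lebesgue"
        using measurable_translation[OF lmeasurable_compact[OF cACt]] by (simp add: fmeasurable_def)
      show "E \<in> lmeasurable" by (rule lmeasurable_compact[OF cE])
    qed
    finally show ?thesis .
  qed
  define s where "s = sqrt n / 4"
  have s0: "0 \<le> s" using npos by (simp add: s_def)
  define Cs where "Cs = (cbox (vec (-s)) (vec s) :: (real^'n) set)"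
  define S where "S = (\<lambda>v. B *v v) ` Cs"
  have mS: "measure lebesgue S = \<bar>det (cj B)\<bar> * (2 * s)^CARD('n)"
  proof -
    have "measure lebesgue Cs = (2 * s)^CARD('n)" unfolding Cs_def by (rule measure_cube[OF s0])
    moreover have "compact Cs" by (simp add: Cs_def)
    ultimately show ?thesis using measure_lin_image[of Cs B] by (simp add: S_def)
  qed
  have ts: "(2*t) * (2 * s) = 1" using npos by (simp add: t_def s_def)
  have prod1: "measure lebesgue ((\<lambda>u. A *v u) ` Ct) * measure lebesgue S = 1"
  proof -
    have "measure lebesgue ((\<lambda>u. A *v u) ` Ct) * measure lebesgue S
        = (\<bar>det (cj A)\<bar> * \<bar>det (cj B)\<bar>) * ((2*t)^CARD('n) * (2 * s)^CARD('n))"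
      by (simp only: m1 mS mult_ac)
    also have "\<dots> = 1" unfolding detprod power_mult_distrib[symmetric] ts by simp
    finally show ?thesis .
  qed
  have mSgt: "measure lebesgue S > 1"
  proof (rule ccontr)
    assume "\<not> measure lebesgue S > 1"
    then have "measure lebesgue ((\<lambda>u. A *v u) ` Ct) * measure lebesgue S \<le> measure lebesgue ((\<lambda>u. A *v u) ` Ct) * 1"
      by (intro mult_left_mono) auto
    then show False using prod1 m1E assms(2) by (simp add: E_def)
  qed
  have cS: "compact S" unfolding S_def
    by (intro compact_continuous_image linear_continuous_on linB) (simp add: Cs_def)
  obtain x y where xS: "x \<in> S" and yS: "y \<in> S" and xy: "x \<noteq> y" and xyZ: "\<forall>i. (x - y)$i \<in> \<int>"
    using blichfeldt[OF cS mSgt] by blast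
  obtain u where u: "u \<in> Cs" "x = B *v u" using xS by (auto simp: S_def)
  obtain w where w: "w \<in> Cs" "y = B *v w" using yS by (auto simp: S_def)
  define c where "c = x - y"
  have Atc: "transpose A *v c = u - w"
    by (simp add: c_def u w matrix_vector_mult_diff_distrib matrix_vector_mul_assoc AtB)
  have "\<bar>(u - w)$i\<bar> \<le> 2 * s" for i
    using u(1) w(1) unfolding Cs_def mem_box_cart vec_component
    by (smt (verit) vector_minus_component)
  then have "norm (transpose A *v c) \<le> sqrt n * (2 * s)"
    unfolding Atc using norm_bound_comp[of "u - w" "2 * s"] by (simp add: n_def)
  also have "\<dots> = n / 2" using npos by (simp add: s_def)
  finally have normc: "norm (transpose A *v c) \<le> n / 2" .
  have cI: "c \<in> int_vectors - {0}"
    using xy xyZ by (simp add: c_def int_vectors_def)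
  have bnd: "\<bar>d \<bullet> z - d \<bullet> a\<bar> \<le> norm (transpose A *v d)" if "z \<in> E" for d z
  proof -
    obtain v where v: "norm v \<le> 1" "z = a + A *v v" using \<open>z \<in> E\<close> by (auto simp: Eeq)
    have "d \<bullet> z - d \<bullet> a = d \<bullet> (A *v v)" by (simp add: v inner_add_right)
    also have "\<dots> = (d v* A) \<bullet> v" by (rule dot_lmul_matrix[symmetric])
    also have "d v* A = transpose A *v d"
      by (metis transpose_transpose vector_transpose_matrix)
    finally have "\<bar>d \<bullet> z - d \<bullet> a\<bar> = \<bar>(transpose A *v d) \<bullet> v\<bar>" by simp
    also have "\<dots> \<le> norm (transpose A *v d) * norm v" by (rule Cauchy_Schwarz_ineq2)
    also have "\<dots> \<le> norm (transpose A *v d)" using v(1) by (simp add: mult_left_le)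
    finally show ?thesis .
  qed
  have wnn: "0 \<le> width_dir E d" for d
    using width_bounds(1)[OF aE bnd] by blast
  have wc: "width_dir E c \<le> n"
    using width_bounds(2)[OF aE bnd, of c] normc by linarith
  have "lattice_width E \<le> width_dir E c"
    unfolding lattice_width_def
    by (rule cInf_lower) (use cI wnn in \<open>auto intro: bdd_belowI2[of _ 0]\<close>)
  then show ?thesis using wc by (simp add: E_def n_def)
qed

end
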